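(* As formal power series in $y$, \[ \sum_{n\ge0}R_n(x)y^n=\frac{1+y+x^3y^3-xy^4}{1-(1+x+x^2)y^2+x^2y^4}+xy . \]
   Context: For $n\ge1$ let $\Xi_n$ be the poset on $\{x_1,\dots,x_n\}$ whose cover relations are exactly: $x_2\prec x_1$, $x_3\prec x_2$, and for $3\le i\le n-1$, $x_i\prec x_{i+1}$ if $i$ is odd and $x_{i+1}\prec x_i$ if $i$ is even (so $x_1>x_2>x_3<x_4>x_5<\cdots$). A filter of a poset is an up-closed subset. $\Omega_n$ is the lattice of filters of $\Xi_n$ under reverse inclusion; $\Omega_0$ is the one-element lattice. $R_n(x)=\sum_{F\in\Omega_n}x^{\,n-|F|}$ is the rank generating function of $\Omega_n$, with $R_0(x)=1$. *)

theory Defs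
  imports "HOL-Computational_Algebra.Formal_Power_Series"
begin

text \<open>Element x_i of Xi_n is represented by the index i, 1 <= i <= n.
  A pair (i, j) in xi_cover n means x_i is covered by x_j (x_i < x_j).\<close>
definition xi_cover :: "nat \<Rightarrow> (nat \<times> nat) set" where
  "xi_cover n =
     {(2, 1) | _::unit. 2 \<le> n} \<union> {(3, 2) | _::unit. 3 \<le> n}
     \<union> {(i, i + 1) | i. 3 \<le> i \<and> i \<le> n - 1 \<and> odd i}
     \<union> {(i + 1, i) | i. 3 \<le> i \<and> i \<le> n - 1 \<and> even i}"

definition xi_le :: "nat \<Rightarrow> nat \<Rightarrow> nat \<Rightarrow> bool" where
  "xi_le n i j \<longleftrightarrow> (i, j) \<in> (xi_cover n)\<^sup>*"

definition is_filter :: "nat \<Rightarrow> nat set \<Rightarrow> bool" where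
  "is_filter n F \<longleftrightarrow> F \<subseteq> {1..n} \<and>
     (\<forall>i\<in>F. \<forall>j\<in>{1..n}. xi_le n i j \<longrightarrow> j \<in> F)"

definition Omega :: "nat \<Rightarrow> nat set set" where
  "Omega n = {F. is_filter n F}"

definition R :: "nat \<Rightarrow> 'a::comm_semiring_1 \<Rightarrow> 'a" where
  "R n x = (\<Sum>F\<in>Omega n. x ^ (n - card F))"

end

theory Submission
  imports Defs
begin
definition up :: "nat \<Rightarrow> bool" where "up n \<longleftrightarrow> odd n \<and> 3 \<le> n"
definition edge :: "nat \<Rightarrow> nat \<times> nat" where
  "edge n = (if up n then (n, Suc n) else (Suc n, n))"

lemma mem_cover: "p \<in> xi_cover n \<longleftrightarrow> (p=(2,1) \<and> 2\<le>n) \<or> (p=(3,2) \<and> 3\<le>n)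
   \<or> (\<exists>i. p=(i,i+1) \<and> 3\<le>i \<and> i+1\<le>n \<and> odd i) \<or> (\<exists>i. p=(i+1,i) \<and> 3\<le>i \<and> i+1 \<le> n \<and> even i)"
  unfolding xi_cover_def by auto

lemma cover_Suc: assumes n: "1 \<le> n" shows "xi_cover (Suc n) = insert (edge n) (xi_cover n)"
proof (rule set_eqI)
  fix p :: "nat \<times> nat"
  obtain a b where p: "p = (a,b)" by (cases p)
  show "p \<in> xi_cover (Suc n) \<longleftrightarrow> p \<in> insert (edge n) (xi_cover n)"
    unfolding p mem_cover insert_iff edge_def up_def
    using n by (auto simp: le_Suc_eq)
qed

lemma cover_bound: "(i,j) \<in> xi_cover n \<Longrightarrow> i \<in> {1..n} \<and> j \<in> {1..n}"
  unfolding xi_cover_def by auto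

definition cl :: "nat \<Rightarrow> nat set \<Rightarrow> bool" where
  "cl n F \<longleftrightarrow> (\<forall>(i,j)\<in>xi_cover n. i \<in> F \<longrightarrow> j \<in> F)"

lemma filter_closed: "is_filter n F \<longleftrightarrow> F \<subseteq> {1..n} \<and> cl n F"
proof
  assume "is_filter n F" then show "F \<subseteq> {1..n} \<and> cl n F"
    unfolding is_filter_def cl_def xi_le_def using cover_bound by blast
next
  assume c: "F \<subseteq> {1..n} \<and> cl n F"
  { fix i j assume "(i,j) \<in> (xi_cover n)\<^sup>*" "i \<in> F"
    then have "j \<in> F"
      by (induction rule: rtrancl_induct) (use c in \<open>auto simp: cl_def\<close>) }
  then show "is_filter n F" using c unfolding is_filter_def xi_le_def by blast
qed

lemma cl_minus: "cl n (F - {Suc n}) \<longleftrightarrow> cl n F"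
  unfolding cl_def using cover_bound by fastforce

lemma cl_Suc: "1 \<le> n \<Longrightarrow> cl (Suc n) F \<longleftrightarrow> cl n F \<and> (fst (edge n) \<in> F \<longrightarrow> snd (edge n) \<in> F)"
  unfolding cl_def cover_Suc by auto

lemma mem_Omega: "F \<in> Omega n \<longleftrightarrow> F \<subseteq> {1..n} \<and> cl n F"
  unfolding Omega_def filter_closed by simp

lemma Omega_Suc:
  assumes n: "1 \<le> n"
  shows "F \<in> Omega (Suc n) \<longleftrightarrow>
    (Suc n \<in> F \<and> F - {Suc n} \<in> Omega n \<and> (up n \<or> n \<in> F)) \<or>
    (Suc n \<notin> F \<and> F \<in> Omega n \<and> (\<not> up n \<or> n \<notin> F))"
proof -
  have s1: "F - {Suc n} \<subseteq> {1..n} \<longleftrightarrow> F \<subseteq> {1..Suc n}" by auto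
  show ?thesis
  proof (cases "Suc n \<in> F")
    case True
    then show ?thesis unfolding mem_Omega cl_Suc[OF n] cl_minus s1
      by (cases "up n") (auto simp: edge_def)
  next
    case False
    then have s2: "F \<subseteq> {1..n} \<longleftrightarrow> F \<subseteq> {1..Suc n}" by (auto simp: le_Suc_eq subset_iff)
    from False show ?thesis unfolding mem_Omega cl_Suc[OF n] cl_minus s2
      by (cases "up n") (auto simp: edge_def)
  qed
qed

lemma finite_Omega: "finite (Omega n)"
proof -
  have "Omega n \<subseteq> Pow {1..n}" unfolding Omega_def is_filter_def by auto
  then show ?thesis by (rule finite_subset) simp
qed

lemma Omega_sub: "F \<in> Omega n \<Longrightarrow> F \<subseteq> {1..n}"
  unfolding Omega_def is_filter_def by auto

lemma Omega_card: "F \<in> Omega n \<Longrightarrow> card F \<le> n"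
  using Omega_sub card_mono[of "{1..n}" F] by fastforce

definition WA :: "nat \<Rightarrow> real \<Rightarrow> real" where
  "WA n x = (\<Sum>F\<in>{F\<in>Omega n. n \<in> F}. x ^ (n - card F))"
definition WB :: "nat \<Rightarrow> real \<Rightarrow> real" where
  "WB n x = (\<Sum>F\<in>{F\<in>Omega n. n \<notin> F}. x ^ (n - card F))"

lemma R_WAB: "R n x = WA n x + WB n x"
proof -
  have e: "Omega n = {F\<in>Omega n. n \<in> F} \<union> {F\<in>Omega n. n \<notin> F}" by auto
  show ?thesis unfolding R_def WA_def WB_def
    by (subst e, rule sum.union_disjoint) (auto intro: finite_subset[OF _ finite_Omega])
qed

lemma WA_Suc: assumes n: "1 \<le> n"
  shows "WA (Suc n) x = (if up n then R n x else WA n x)"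
proof -
  have e: "{F\<in>Omega (Suc n). Suc n \<in> F} = insert (Suc n) ` {G\<in>Omega n. up n \<or> n \<in> G}"
  proof (rule set_eqI)
    fix F
    show "F \<in> {F\<in>Omega (Suc n). Suc n \<in> F} \<longleftrightarrow> F \<in> insert (Suc n) ` {G\<in>Omega n. up n \<or> n \<in> G}"
    proof
      assume "F \<in> {F\<in>Omega (Suc n). Suc n \<in> F}"
      then have "Suc n \<in> F" "F - {Suc n} \<in> Omega n" "up n \<or> n \<in> F" using Omega_Suc[OF n] by auto
      then show "F \<in> insert (Suc n) ` {G\<in>Omega n. up n \<or> n \<in> G}"
        by (intro image_eqI[of _ _ "F - {Suc n}"]) auto
    next
      assume "F \<in> insert (Suc n) ` {G\<in>Omega n. up n \<or> n \<in> G}"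
      then obtain G where G: "F = insert (Suc n) G" "G \<in> Omega n" "up n \<or> n \<in> G" by auto
      have "Suc n \<notin> G" using Omega_sub[OF G(2)] by auto
      then have "F - {Suc n} = G" using G by auto
      then show "F \<in> {F\<in>Omega (Suc n). Suc n \<in> F}" using Omega_Suc[OF n] G by auto
    qed
  qed
  have inj: "inj_on (insert (Suc n)) {G\<in>Omega n. up n \<or> n \<in> G}"
  proof (rule inj_onI)
    fix G H assume "G \<in> {G\<in>Omega n. up n \<or> n \<in> G}" "H \<in> {G\<in>Omega n. up n \<or> n \<in> G}"
      "insert (Suc n) G = insert (Suc n) H"
    then show "G = H" using Omega_sub[of G n] Omega_sub[of H n]
      by (metis Diff_insert_absorb atLeastAtMost_iff mem_Collect_eq not_less_eq_eq order_refl subsetD)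
  qed
  have w: "x ^ (Suc n - card (insert (Suc n) G)) = x ^ (n - card G)" if "G \<in> {G\<in>Omega n. up n \<or> n \<in> G}" for G
  proof -
    have "Suc n \<notin> G" "finite G" using Omega_sub[of G n] that by (auto intro: finite_subset)
    then show ?thesis by simp
  qed
  have "WA (Suc n) x = (\<Sum>G\<in>{G\<in>Omega n. up n \<or> n \<in> G}. x ^ (n - card G))"
    unfolding WA_def e by (simp add: sum.reindex[OF inj] w)
  then show ?thesis unfolding R_def WA_def by (cases "up n") auto
qed

lemma WB_Suc: assumes n: "1 \<le> n"
  shows "WB (Suc n) x = x * (if up n then WB n x else R n x)"
proof -
  have e: "{F\<in>Omega (Suc n). Suc n \<notin> F} = {G\<in>Omega n. \<not> up n \<or> n \<notin> G}"
    using Omega_Suc[OF n] Omega_sub by fastforce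
  have "WB (Suc n) x = (\<Sum>G\<in>{G\<in>Omega n. \<not> up n \<or> n \<notin> G}. x * x ^ (n - card G))"
    unfolding WB_def e by (rule sum.cong) (auto simp: Suc_diff_le Omega_card)
  also have "\<dots> = x * (\<Sum>G\<in>{G\<in>Omega n. \<not> up n \<or> n \<notin> G}. x ^ (n - card G))"
    by (simp add: sum_distrib_left)
  finally show ?thesis unfolding R_def WB_def by (cases "up n") auto
qed

lemma Omega1: "Omega 1 = {{}, {1}}"
proof -
  have "xi_cover 1 = {}" unfolding xi_cover_def by auto
  then have "Omega 1 = Pow {1}" unfolding Omega_def filter_closed cl_def by auto
  then show ?thesis by auto
qed

lemma WA1: "WA 1 x = 1"
proof -
  have "{F\<in>Omega 1. 1\<in>F} = {{1}}" unfolding Omega1 by auto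
  then show ?thesis unfolding WA_def by simp
qed
lemma WB1: "WB 1 x = x"
proof -
  have "{F\<in>Omega 1. 1\<notin>F} = {{}}" unfolding Omega1 by auto
  then show ?thesis unfolding WB_def by simp
qed

lemma up_simps: "up 1 = False" "up 2 = False" "up 3 = True" "up 4 = False" "up 5 = True"
  by (auto simp: up_def)

lemma Omega0: "Omega 0 = {{}}"
proof (rule set_eqI)
  fix F show "F \<in> Omega 0 \<longleftrightarrow> F \<in> {{}}" by (auto simp: mem_Omega cl_def xi_cover_def)
qed

lemma R0: "R 0 (x::real) = 1" unfolding R_def Omega0 by simp

lemma WA_S: "1 \<le> k \<Longrightarrow> WA (Suc k) x = (if up k then WA k x + WB k x else WA k x)"
  using WA_Suc[of k x] R_WAB[of k x] by simp
lemma WB_S: "1 \<le> k \<Longrightarrow> WB (Suc k) x = (if up k then x * WB k x else x * (WA k x + WB k x))"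
  using WB_Suc[of k x] R_WAB[of k x] by simp

lemma small:
  "WA 2 x = 1" "WB 2 x = x * (1 + x)"
  "WA 3 x = 1" "WB 3 x = x * (1 + x * (1 + x))"
  "WA 4 x = WA 3 x + WB 3 x" "WB 4 x = x * WB 3 x"
  "WA 5 x = WA 4 x" "WB 5 x = x * (WA 4 x + WB 4 x)"
  "WA 6 x = WA 5 x + WB 5 x" "WB 6 x = x * WB 5 x"
proof -
  have u: "\<not> up 1" "\<not> up 2" "up 3" "\<not> up 4" "up 5" by (auto simp: up_def)
  have a2: "WA 2 x = 1" using WA_S[of 1 x] u WA1 by (simp add: numeral_2_eq_2)
  have b2: "WB 2 x = x * (1 + x)" using WB_S[of 1 x] u WA1 WB1 by (simp add: numeral_2_eq_2)
  have a3: "WA 3 x = WA 2 x" using WA_S[of 2 x] u by (simp add: numeral_3_eq_3 numeral_2_eq_2)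
  have b3: "WB 3 x = x * (WA 2 x + WB 2 x)" using WB_S[of 2 x] u by (simp add: numeral_3_eq_3 numeral_2_eq_2)
  have e4: "(4::nat) = Suc 3" "(5::nat) = Suc 4" "(6::nat) = Suc 5" by simp_all
  have a4: "WA 4 x = WA 3 x + WB 3 x" using WA_S[of 3 x] u unfolding e4 by simp
  have b4: "WB 4 x = x * WB 3 x" using WB_S[of 3 x] u unfolding e4 by simp
  have a5: "WA 5 x = WA 4 x" using WA_S[of 4 x] u unfolding e4 by simp
  have b5: "WB 5 x = x * (WA 4 x + WB 4 x)" using WB_S[of 4 x] u unfolding e4 by simp
  have a6: "WA 6 x = WA 5 x + WB 5 x" using WA_S[of 5 x] u unfolding e4 by simp
  have b6: "WB 6 x = x * WB 5 x" using WB_S[of 5 x] u unfolding e4 by simp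
  show "WA 2 x = 1" "WB 2 x = x * (1 + x)"
  "WA 3 x = 1" "WB 3 x = x * (1 + x * (1 + x))"
  "WA 4 x = WA 3 x + WB 3 x" "WB 4 x = x * WB 3 x"
  "WA 5 x = WA 4 x" "WB 5 x = x * (WA 4 x + WB 4 x)"
  "WA 6 x = WA 5 x + WB 5 x" "WB 6 x = x * WB 5 x"
    using a2 b2 a3 b3 a4 b4 a5 b5 a6 b6 by (simp_all add: algebra_simps)
qed

lemma R_rec: fixes x :: real assumes n: "3 \<le> n"
  shows "R (n+4) x = (1+x+x^2) * R (n+2) x - x^2 * R n x"
proof -
  have e: "n+4 = Suc (Suc (Suc (Suc n)))" "n+2 = Suc (Suc n)" by simp_all
  have k: "1 \<le> n" "1 \<le> Suc n" "1 \<le> Suc (Suc n)" "1 \<le> Suc (Suc (Suc n))" using n by auto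
  show ?thesis
  proof (cases "odd n")
    case True
    have u: "up n" "\<not> up (Suc n)" "up (Suc (Suc n))" "\<not> up (Suc (Suc (Suc n)))" using True n by (auto simp: up_def)
    show ?thesis unfolding e R_WAB
      using WA_S[OF k(1), of x] WB_S[OF k(1), of x] WA_S[OF k(2), of x] WB_S[OF k(2), of x]
        WA_S[OF k(3), of x] WB_S[OF k(3), of x] WA_S[OF k(4), of x] WB_S[OF k(4), of x] u
      by (simp add: algebra_simps power2_eq_square)
  next
    case False
    have u: "\<not> up n" "up (Suc n)" "\<not> up (Suc (Suc n))" "up (Suc (Suc (Suc n)))" using False n by (auto simp: up_def)
    show ?thesis unfolding e R_WAB
      using WA_S[OF k(1), of x] WB_S[OF k(1), of x] WA_S[OF k(2), of x] WB_S[OF k(2), of x]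
        WA_S[OF k(3), of x] WB_S[OF k(3), of x] WA_S[OF k(4), of x] WB_S[OF k(4), of x] u
      by (simp add: algebra_simps power2_eq_square)
  qed
qed

lemma Rvals: fixes x :: real shows
  "R 1 x = 1 + x" "R 2 x = 1 + x + x^2" "R 3 x = 1 + x + x^2 + x^3"
  "R 4 x = 1 + x + 2*x^2 + 2*x^3 + x^4"
  "R 5 x = 1 + 2*x + 2*x^2 + 3*x^3 + 2*x^4 + x^5"
  "R 6 x = 1 + 2*x + 3*x^2 + 4*x^3 + 4*x^4 + 3*x^5 + x^6"
  using R_WAB[of 1 x] R_WAB[of 2 x] R_WAB[of 3 x] R_WAB[of 4 x] R_WAB[of 5 x] R_WAB[of 6 x]
    small[of x] WA1[of x] WB1[of x]
  by (simp_all add: algebra_simps power2_eq_square power3_eq_cube power4_eq_xxxx numeral_eq_Suc)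

theorem mainTheorem6:
  fixes x :: real
  shows "Abs_fps (\<lambda>n. R n x) =
     (1 + fps_X + fps_const (x^3) * fps_X^3 - fps_const x * fps_X^4)
       / (1 - fps_const (1 + x + x^2) * fps_X^2 + fps_const (x^2) * fps_X^4)
     + fps_const x * fps_X"
proof -
  define a where "a = Abs_fps (\<lambda>n. R n x)"
  define D :: "real fps" where "D = 1 - fps_const (1 + x + x^2) * fps_X^2 + fps_const (x^2) * fps_X^4"
  define N :: "real fps" where "N = 1 + fps_X + fps_const (x^3) * fps_X^3 - fps_const x * fps_X^4"
  define q :: "real fps" where "q = fps_const x * fps_X"
  have D0: "D \<noteq> 0"
  proof
    assume "D = 0" then have "fps_nth D 0 = 0" by simp
    then show False unfolding D_def by simp
  qed
  have aD: "a * D = a - fps_const (1 + x + x^2) * (fps_X^2 * a) + fps_const (x^2) * (fps_X^4 * a)"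
    unfolding D_def by (simp add: algebra_simps)
  have key: "a * D = N + q * D"
  proof (rule fps_ext)
    fix n
    have l: "fps_nth (a * D) n = R n x - (1 + x + x^2) * (if n < 2 then 0 else R (n-2) x) + x^2 * (if n < 4 then 0 else R (n-4) x)"
      unfolding aD by (simp add: fps_X_power_mult_nth a_def)
    have Dn: "fps_nth D m = (if m = 0 then 1 else 0) - (1 + x + x^2) * (if m = 2 then 1 else 0) + x^2 * (if m = 4 then 1 else 0)" for m
      unfolding D_def by simp
    have r: "fps_nth (N + q * D) n = (if n = 0 then 1 else 0) + (if n = 1 then 1 else 0) + x^3 * (if n = 3 then 1 else 0)
       - x * (if n = 4 then 1 else 0) + x * (if n = 0 then 0 else fps_nth D (n - 1))"
      unfolding N_def q_def by (simp add: mult.assoc)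
    show "fps_nth (a * D) n = fps_nth (N + q * D) n"
    proof (cases "n \<le> 6")
      case True
      have x56: "x^5 = x*x*x*x*x" "x^6 = x*x*x*x*x*x" by algebra+
      from True have h: "n = 0 \<or> n = 1 \<or> n = 2 \<or> n = 3 \<or> n = 4 \<or> n = 5 \<or> n = 6" by auto
      show ?thesis unfolding l r Dn using h
        using Rvals(1)[of x, unfolded One_nat_def] x56
        apply (elim disjE)
        subgoal by (simp add: R0)
        subgoal using Rvals(1)[of x] by simp
        subgoal by (simp add: Rvals R0 One_nat_def)
        subgoal by (simp add: Rvals R0 One_nat_def algebra_simps power2_eq_square power3_eq_cube)
        subgoal by (simp add: Rvals R0 One_nat_def algebra_simps power2_eq_square power3_eq_cube power4_eq_xxxx)
        subgoal by (simp add: Rvals R0 One_nat_def algebra_simps power2_eq_square power3_eq_cube power4_eq_xxxx)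
        subgoal by (simp add: Rvals R0 One_nat_def algebra_simps power2_eq_square power3_eq_cube power4_eq_xxxx)
        done
    next
      case False
      define m where "m = n - 4"
      have m: "n = m + 4" "3 \<le> m" using False unfolding m_def by auto
      have "m + 4 - 2 = m + 2" by simp
      moreover have "m \<noteq> 0" "m \<noteq> Suc 0" using m(2) by auto
      ultimately show ?thesis unfolding l r Dn using R_rec[OF m(2), of x] by (simp add: m(1))
    qed
  qed
  have "a = (a * D) / D" using D0 by (simp add: fps_divide_times_eq)
  also have "\<dots> = N / D + q" unfolding key fps_divide_add using D0 by (simp add: fps_divide_times_eq)
  finally show ?thesis unfolding a_def N_def D_def q_def .
qed
end
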